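(* Let $n \geq 2$ be an integer, let $p(x) \in \mathcal{T}_n$, and let $r = \deg \mathrm{Min}(p,x)$, where $1 \leq r \leq n$. Let $q(x) \in \mathcal{J}(p(x))$ and let $f(x) = q(x)/\gcd(p(x),p'(x)) \in \mathbb{Z}[x]$. Then there exist nonnegative real numbers $\gamma_1, \dots, \gamma_r$ such that \[ \mathrm{coeff}(f(x-1)) = \sum_{j=1}^r \gamma_j \cdot \mathrm{coeff}(\mathrm{Min}_j(p, x-1)). \]
   Context: A nonzero real polynomial is real-rooted if all its complex roots are real. For $n\ge1$, a Seidel trace polynomial of degree $n$ is a real-rooted polynomial $p(x)=\sum_{i=0}^n a_i x^{n-i}\in\mathbb{Z}[x]$ of degree $n$ with $a_0=1$, $a_1=0$, and $a_2=-\binom{n}{2}$ if $n\ge2$; $\mathcal{T}_n$ is the set of these. For real-rooted $p,q$ with $\deg p = m$, $\deg q = m-1$, roots $\lambda_1\le\dots\le\lambda_m$ of $p$ and $\mu_1\le\dots\le\mu_{m-1}$ of $q$, we say $q$ interlaces $p$ if $\lambda_i \le \mu_i \le \lambda_{i+1}$ for all $i$. For $p\in\mathcal{T}_n$, $\mathcal{J}(p(x))$ is the set of integer polynomials $q(x)$ of degree $n-1$ with $q\in\mathcal{T}_{n-1}$ and $q$ interlacing $p$. Here $\gcd(p(x),p'(x))$ is the monic gcd and $\mathrm{Min}(p,x) := p(x)/\gcd(p(x),p'(x))$. Writing $\mathrm{Min}(p,x) = \prod_{i=1}^r (x-\lambda_i)$ with $\lambda_1<\dots<\lambda_r$, define $\mathrm{Min}_j(p,x)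 := \prod_{1\le i\le r,\, i\ne j}(x-\lambda_i)$ for $j\in\{1,\dots,r\}$, and $\mathrm{Min}_j(p,x-1)$ is obtained by substituting $x-1$ for $x$. For a nonzero polynomial $g(x)$ of degree $m$, $\mathrm{coeff}(g)\in\mathbb{R}^{m+1}$ is its coefficient vector, whose $i$th entry is the coefficient of $x^{m-i+1}$ in $g(x)$. *)

theory Defs
  imports "HOL-Computational_Algebra.Computational_Algebra" "HOL-Computational_Algebra.Field_as_Ring"
begin

definition real_rooted :: "real poly \<Rightarrow> bool" where
  "real_rooted p \<longleftrightarrow> p \<noteq> 0 \<and>
     (\<forall>z::complex. poly (map_poly complex_of_real p) z = 0 \<longrightarrow> z \<in> \<real>)"

definition rpoly :: "int poly \<Rightarrow> real poly" where
  "rpoly p = map_poly real_of_int p"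

text \<open>Seidel trace polynomials of degree n; a_i is the coefficient of x^(n-i).\<close>
definition seidel_trace :: "nat \<Rightarrow> int poly \<Rightarrow> bool" where
  "seidel_trace n p \<longleftrightarrow> n \<ge> 1 \<and> real_rooted (rpoly p) \<and> degree p = n \<and>
     coeff p n = 1 \<and> coeff p (n - 1) = 0 \<and>
     (n \<ge> 2 \<longrightarrow> coeff p (n - 2) = - int (n choose 2))"

definition sorted_roots :: "real poly \<Rightarrow> real list" where
  "sorted_roots p = (THE xs. sorted xs \<and>
     p = smult (lead_coeff p) (prod_list (map (\<lambda>a. [:-a, 1:]) xs)))"

definition interlaces :: "real poly \<Rightarrow> real poly \<Rightarrow> bool" where
  "interlaces q p \<longleftrightarrow> real_rooted p \<and> real_rooted q \<and> degree p \<ge> 1 \<and>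
     degree q = degree p - 1 \<and>
     (\<forall>i < degree p - 1. sorted_roots p ! i \<le> sorted_roots q ! i \<and>
                         sorted_roots q ! i \<le> sorted_roots p ! (i + 1))"

definition J_set :: "nat \<Rightarrow> int poly \<Rightarrow> int poly set" where
  "J_set n p = {q. degree q = n - 1 \<and> seidel_trace (n - 1) q \<and> interlaces (rpoly q) (rpoly p)}"

text \<open>Monic gcd (gcd over the field of reals is normalized to be monic).\<close>
definition gcdp :: "real poly \<Rightarrow> real poly" where
  "gcdp p = gcd p (pderiv p)"

definition Minp :: "real poly \<Rightarrow> real poly" where
  "Minp p = p div gcdp p"

definition Min_roots :: "real poly \<Rightarrow> real list" where
  "Min_roots p = sorted_list_of_set {x. poly (Minp p) x = 0}"

definition Minj :: "real poly \<Rightarrow> nat \<Rightarrow> real poly" where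
  "Minj p j = (\<Prod>i\<in>{1..length (Min_roots p)} - {j}. [:- (Min_roots p ! (i - 1)), 1:])"

definition shift1 :: "real poly \<Rightarrow> real poly" where
  "shift1 g = pcompose g [:-1, 1:]"

text \<open>coeff(g): the i-th entry (1-indexed) is the coefficient of x^(m-i+1).\<close>
definition coeff_vec :: "real poly \<Rightarrow> real list" where
  "coeff_vec g = rev (coeffs g)"

end

theory Submission
  imports Defs "Berlekamp_Zassenhaus.Square_Free_Factorization_Int"
begin

interpretation cr_hom: map_poly_idom_hom complex_of_real by unfold_locales

definition LP :: "real multiset \<Rightarrow> real poly" where
  "LP X = (\<Prod>x\<in>#X. [:-x,1:])"

lemma LP_empty[simp]: "LP {#} = 1" by (simp add: LP_def)
lemma LP_add: "LP (X + Y) = LP X * LP Y" by (simp add: LP_def)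
lemma LP_add_mset[simp]: "LP (add_mset a X) = [:-a,1:] * LP X" by (simp add: LP_def)

lemma LP_nz[simp]: "LP X \<noteq> 0"
  by (induct X) (auto simp del: mult_pCons_left)

lemma LP_monic[simp]: "lead_coeff (LP X) = 1"
  by (induct X) (auto simp del: mult_pCons_left simp: lead_coeff_mult)

lemma degree_LP[simp]: "degree (LP X) = size X"
  by (induct X) (auto simp del: mult_pCons_left simp: degree_mult_eq)

lemma order_lin: "Polynomial.order a [:-x,1:] = (if x = a then 1 else 0)"
  using order_linear'[of a "-x"] by auto

lemma order_LP: "Polynomial.order a (LP X) = count X a"
proof (induct X)
  case (add x X)
  have "Polynomial.order a ([:-x,1:] * LP X) = Polynomial.order a [:-x,1:] + Polynomial.order a (LP X)"
    by (rule order_mult) (simp del: mult_pCons_left)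
  then show ?case using add by (simp only: LP_add_mset order_lin) auto
qed simp

lemma LP_inj: "LP X = LP Y \<Longrightarrow> X = Y"
  by (metis multiset_eqI order_LP)

lemma poly_LP: "poly (LP X) t = (\<Prod>x\<in>#X. t - x)"
  by (induct X) (auto simp: algebra_simps)

lemma LP_list: "prod_list (map (\<lambda>a. [:-a,1:]) xs) = LP (mset xs)"
  by (induct xs) auto

lemma real_rooted_factor:
  assumes "real_rooted p" shows "\<exists>X. p = Polynomial.smult (lead_coeff p) (LP X)"
  using assms
proof (induct "degree p" arbitrary: p)
  case 0
  then obtain c where "p = [:c:]" by (metis degree_eq_zeroE)
  then show ?case by (intro exI[of _ "{#}"]) auto
next
  case (Suc k p)
  let ?cp = "map_poly complex_of_real p"
  have "degree ?cp = Suc k" using Suc by simp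
  hence "\<not> constant (poly ?cp)" by (simp add: constant_degree)
  from fundamental_theorem_of_algebra[OF this] obtain z where z: "poly ?cp z = 0" by auto
  with Suc(3) have "z \<in> \<real>" unfolding real_rooted_def by auto
  then obtain a where za: "z = of_real a" by (auto elim: Reals_cases)
  have "poly p a = 0" using z za by (simp add: of_real_hom.poly_map_poly)
  hence "[:-a,1:] dvd p" by (simp add: poly_eq_0_iff_dvd)
  then obtain q where pq: "p = [:-a,1:] * q" by (auto elim: dvdE)
  have p0: "p \<noteq> 0" using Suc(3) by (simp add: real_rooted_def)
  hence q0: "q \<noteq> 0" using pq by auto
  have "degree p = degree [:-a,1:] + degree q" unfolding pq by (rule degree_mult_eq) (use q0 in auto)
  hence dq: "degree q = k" using Suc(2) by simp
  have "real_rooted q" unfolding real_rooted_def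
  proof safe
    fix w assume "poly (map_poly complex_of_real q) w = 0"
    hence "poly ?cp w = 0" unfolding pq by (simp only: cr_hom.hom_mult poly_mult mult_zero_right simp_thms)
    with Suc(3) show "w \<in> \<real>" unfolding real_rooted_def by auto
  qed (use q0 in auto)
  from Suc(1)[OF dq[symmetric] this] obtain Y where qY: "q = Polynomial.smult (lead_coeff q) (LP Y)" by auto
  have "lead_coeff p = lead_coeff q" unfolding pq by (simp only: lead_coeff_mult) simp
  hence "p = Polynomial.smult (lead_coeff p) (LP (add_mset a Y))" using pq qY
    by (metis LP_add_mset mult_smult_right)
  then show ?case by blast
qed

lemma sorted_roots_LP:
  assumes "real_rooted p"
  shows "p = Polynomial.smult (lead_coeff p) (LP (mset (sorted_roots p)))"
    "length (sorted_roots p) = degree p"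
proof -
  from real_rooted_factor[OF assms] obtain X where X: "p = Polynomial.smult (lead_coeff p) (LP X)" by auto
  have p0: "p \<noteq> 0" "lead_coeff p \<noteq> 0" using assms by (auto simp: real_rooted_def)
  let ?xs = "sort (sorted_list_of_multiset X)"
  have mx: "mset ?xs = X" by simp
  have pl: "prod_list (map (\<lambda>a. [:-a,1:]) ?xs) = LP X" by (simp only: LP_list mx)
  have P: "sorted ?xs \<and> p = Polynomial.smult (lead_coeff p) (prod_list (map (\<lambda>a. [:-a,1:]) ?xs))"
    using X by (simp only: pl sorted_sort simp_thms)
  have "sorted_roots p = ?xs" unfolding sorted_roots_def
  proof (rule the_equality)
    fix ys assume ys: "sorted ys \<and> p = Polynomial.smult (lead_coeff p) (prod_list (map (\<lambda>a. [:-a,1:]) ys))"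
    hence "p = Polynomial.smult (lead_coeff p) (LP (mset ys))" by (simp only: LP_list)
    hence "Polynomial.smult (lead_coeff p) (LP (mset ys)) = Polynomial.smult (lead_coeff p) (LP X)"
      using X by simp
    hence "LP (mset ys) = LP X" using p0(2) by (rule smult_cancel[rotated])
    hence "mset ys = mset ?xs" using LP_inj mx by auto
    hence "sort ?xs = ys" using ys by (intro properties_for_sort) auto
    moreover have ss: "sort ?xs = ?xs" by (rule sorted_sort_id, rule sorted_sort)
    ultimately show "ys = ?xs" by metis
  qed (rule P)
  thus "p = Polynomial.smult (lead_coeff p) (LP (mset (sorted_roots p)))" using X mx by simp
  have "degree p = size X" using X p0 by (metis degree_LP degree_smult_eq)
  thus "length (sorted_roots p) = degree p"
    using \<open>sorted_roots p = ?xs\<close> mx by (metis size_mset)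
qed

lemma interlace_count:
  assumes la: "length as = Suc m" and lb: "length bs = m"
    and il: "\<forall>i<m. as!i \<le> bs!i \<and> bs!i \<le> as!(Suc i)"
    and mono: "\<And>x y. x \<le> y \<Longrightarrow> Pr y \<Longrightarrow> Pr (x::real)"
  shows "length (filter Pr bs) \<le> length (filter Pr as)"
        "length (filter Pr as) \<le> Suc (length (filter Pr bs))"
proof -
  let ?S = "{i. i < m \<and> Pr (bs!i)}"
  have A: "?S \<subseteq> {i. i < Suc m \<and> Pr (as!i)}" using il mono by auto
  have B: "{i. i < Suc m \<and> Pr (as!i)} \<subseteq> insert 0 (Suc ` ?S)"
  proof
    fix i assume i: "i \<in> {i. i < Suc m \<and> Pr (as!i)}"
    show "i \<in> insert 0 (Suc ` ?S)"
    proof (cases i)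
      case (Suc k)
      then have "k < m" "Pr (as ! Suc k)" using i by auto
      hence "Pr (bs!k)" using il mono by blast
      thus ?thesis using Suc \<open>k < m\<close> by auto
    qed simp
  qed
  show "length (filter Pr bs) \<le> length (filter Pr as)"
    unfolding length_filter_conv_card la lb by (rule card_mono[OF _ A]) simp
  have "card {i. i < Suc m \<and> Pr (as!i)} \<le> card (insert 0 (Suc ` ?S))"
    by (rule card_mono[OF _ B]) simp
  also have "\<dots> \<le> Suc (card (Suc ` ?S))" by (simp add: card_insert_if)
  also have "card (Suc ` ?S) = card ?S" by (simp add: card_image)
  finally show "length (filter Pr as) \<le> Suc (length (filter Pr bs))"
    unfolding length_filter_conv_card la lb .
qed

lemma count_le_lt: "count X (t::real) = size {#x\<in>#X. x \<le> t#} - size {#x\<in>#X. x < t#}"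
proof -
  have "{#x\<in>#X. x \<le> t#} = {#x\<in>#X. x < t#} + {#x\<in>#X. x = t#}"
    by (rule multiset_eqI) auto
  moreover have "{#x\<in>#X. x = t#} = replicate_mset (count X t) t"
    by (metis filter_eq_replicate_mset)
  ultimately show ?thesis by simp
qed

lemma real_rooted_dvd: assumes "real_rooted P" "d dvd P" shows "real_rooted d"
proof -
  obtain e where e: "P = d * e" using assms(2) by (auto elim: dvdE)
  have "d \<noteq> 0" using assms(1) e by (auto simp: real_rooted_def)
  show ?thesis unfolding real_rooted_def
  proof safe
    fix z assume "poly (map_poly complex_of_real d) z = 0"
    hence "poly (map_poly complex_of_real P) z = 0" unfolding e
      by (simp only: cr_hom.hom_mult poly_mult mult_zero_left simp_thms)
    thus "z \<in> \<real>" using assms(1) unfolding real_rooted_def by blast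
  qed (use \<open>d \<noteq> 0\<close> in auto)
qed

lemma monic_real_rooted_LP: assumes "real_rooted d" "lead_coeff d = 1" obtains X where "d = LP X"
  using real_rooted_factor[OF assms(1)] assms(2) by auto

lemma gcd_struct:
  fixes P :: "real poly"
  assumes rr: "real_rooted P" and PA: "P = LP A" and sz: "size A \<ge> 1"
  shows "gcd P (pderiv P) = LP (A - mset_set (set_mset A))"
        "P div gcd P (pderiv P) = LP (mset_set (set_mset A))"
proof -
  define D where "D = gcd P (pderiv P)"
  define M where "M = P div D"
  have P0: "P \<noteq> 0" using PA by simp
  have dP: "degree P \<ge> 1" using PA sz by simp
  have pd0: "pderiv P \<noteq> 0" using dP by (simp add: pderiv_eq_0_iff)
  have Ddvd: "D dvd P" unfolding D_def by simp
  have PMD: "P = M * D" unfolding M_def using Ddvd by simp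
  have Ddvd': "D dvd pderiv P" unfolding D_def by simp
  then obtain e where e: "pderiv P = e * D" by (metis dvd_def mult.commute)
  have bez: "D = fst (bezout_coefficients P (pderiv P)) * P + snd (bezout_coefficients P (pderiv P)) * pderiv P"
    unfolding D_def by (simp only: bezout_coefficients_fst_snd)
  have ordM: "\<And>a. Polynomial.order a M = (if Polynomial.order a P = 0 then 0 else 1)"
    by (rule poly_squarefree_decomp_order[OF pd0 PMD e bez])
  have Dmon: "lead_coeff D = 1" unfolding D_def using P0 poly_gcd_monic by blast
  have Mmon: "lead_coeff M = 1" using PMD Dmon PA by (metis LP_monic lead_coeff_mult mult.right_neutral)
  have "real_rooted D" using rr Ddvd by (rule real_rooted_dvd)
  then obtain G where G: "D = LP G" using Dmon by (rule monic_real_rooted_LP)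
  have "M dvd P" using PMD by (metis dvd_triv_left)
  with rr have "real_rooted M" by (rule real_rooted_dvd)
  then obtain K where K: "M = LP K" using Mmon by (rule monic_real_rooted_LP)
  have AKG: "A = K + G" using PA PMD G K by (metis LP_add LP_inj)
  have KA: "K = mset_set (set_mset A)"
  proof (rule multiset_eqI)
    fix a
    have "count K a = Polynomial.order a M" by (simp add: K order_LP)
    also have "\<dots> = (if count A a = 0 then 0 else 1)" using ordM[of a] by (simp add: PA order_LP)
    also have "\<dots> = count (mset_set (set_mset A)) a" by (auto simp: count_mset_set not_in_iff)
    finally show "count K a = count (mset_set (set_mset A)) a" .
  qed
  show "P div gcd P (pderiv P) = LP (mset_set (set_mset A))" using K KA unfolding M_def D_def by simp
  have "G = A - K" using AKG by simp
  then show "gcd P (pderiv P) = LP (A - mset_set (set_mset A))" using G KA unfolding D_def by simp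
qed

interpretation rr_hom: field_hom' "of_rat :: rat \<Rightarrow> real" by unfold_locales auto

lemma rpoly_rat: "map_poly of_rat (map_poly rat_of_int p) = rpoly p"
  unfolding rpoly_def by (subst map_poly_map_poly) (auto simp: o_def)

lemma gcdp_int:
  fixes p :: "int poly"
  assumes "lead_coeff p = 1"
  shows "\<exists>g. gcdp (rpoly p) = rpoly g"
proof -
  define gi where "gi = gcd p (pderiv p)"
  have "gi dvd p" unfolding gi_def by simp
  then obtain h where h: "p = gi * h" by (auto elim: dvdE)
  have "lead_coeff gi * lead_coeff h = 1" using assms h by (metis lead_coeff_mult)
  hence lc: "lead_coeff gi = 1 \<or> lead_coeff gi = -1" using zmult_eq_1_iff by blast
  have "gcd (map_poly rat_of_int p) (map_poly rat_of_int (pderiv p)) =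
        Polynomial.smult (inverse (of_int (lead_coeff gi))) (map_poly rat_of_int gi)"
    unfolding gi_def by (rule gcd_rat_to_gcd_int)
  hence "map_poly (of_rat :: rat \<Rightarrow> real) (gcd (map_poly rat_of_int p) (map_poly rat_of_int (pderiv p))) =
        map_poly (of_rat :: rat \<Rightarrow> real) (Polynomial.smult (inverse (of_int (lead_coeff gi))) (map_poly rat_of_int gi))"
    by simp
  hence "gcd (rpoly p) (rpoly (pderiv p)) = Polynomial.smult (of_rat (inverse (of_int (lead_coeff gi)))) (rpoly gi)"
    by (simp only: rr_hom.map_poly_gcd rpoly_rat of_rat_hom.map_poly_hom_smult)
  hence "gcd (rpoly p) (rpoly (pderiv p)) = Polynomial.smult (inverse (of_int (lead_coeff gi))) (rpoly gi)"
    by (simp add: of_rat_inverse)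
  moreover have "rpoly (pderiv p) = pderiv (rpoly p)" unfolding rpoly_def
    by (simp add: of_int_hom.map_poly_pderiv)
  ultimately have "gcdp (rpoly p) = Polynomial.smult (inverse (of_int (lead_coeff gi))) (rpoly gi)"
    unfolding gcdp_def by simp
  also have "\<dots> = rpoly (Polynomial.smult (lead_coeff gi) gi)"
    using lc unfolding rpoly_def by (auto simp: of_int_hom.map_poly_hom_smult)
  finally show ?thesis by blast
qed

lemma monic_int_div:
  fixes g q :: "int poly"
  assumes g1: "lead_coeff g = 1" and dv: "rpoly g dvd rpoly q"
  shows "\<exists>h. rpoly h = rpoly q div rpoly g"
proof -
  obtain s t where st: "pseudo_divmod q g = (s, t)" by force
  have g0: "g \<noteq> 0" using g1 by auto
  have eq: "Polynomial.smult (Polynomial.coeff g (degree g) ^ (Suc (degree q) - degree g)) q = g * s + t"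
    and dt: "t = 0 \<or> degree t < degree g" using pseudo_divmod[OF g0 st] by auto
  from eq g1 have eq': "q = g * s + t" by simp
  have rg0: "rpoly g \<noteq> 0" using g0 unfolding rpoly_def by simp
  define f where "f = rpoly q div rpoly g"
  have qf: "rpoly q = rpoly g * f" unfolding f_def using dv by simp
  have "rpoly q = rpoly g * rpoly s + rpoly t" unfolding eq' rpoly_def
    by (simp add: of_int_poly_hom.hom_mult of_int_poly_hom.hom_add)
  hence E: "rpoly g * (f - rpoly s) = rpoly t" using qf by (simp add: algebra_simps)
  have "f = rpoly s"
  proof (rule ccontr)
    assume ne: "f \<noteq> rpoly s"
    hence "rpoly t \<noteq> 0" using E rg0 by (metis mult_eq_0_iff right_minus_eq)
    hence "t \<noteq> 0" unfolding rpoly_def by auto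
    hence "degree t < degree g" using dt by auto
    moreover have "degree (rpoly g * (f - rpoly s)) = degree (rpoly g) + degree (f - rpoly s)"
      using ne rg0 by (intro degree_mult_eq) auto
    ultimately show False using E unfolding rpoly_def by (simp add: of_int_hom.degree_map_poly_hom)
  qed
  thus ?thesis unfolding f_def by (intro exI[of _ s]) simp
qed

lemma poly_LP_0: "poly (LP X) t = 0 \<longleftrightarrow> t \<in># X"
  using order_root[of "LP X" t] by (simp add: order_LP)

lemma prod_sign: "(\<Prod>c\<in>#X. (t::real) - c) = (-1)^(size {#c\<in>#X. t < c#}) * (\<Prod>c\<in>#X. \<bar>t - c\<bar>)"
proof (induct X)
  case (add x X)
  let ?s = "size {#c\<in>#X. t < c#}"
  let ?a = "(\<Prod>c\<in>#X. \<bar>t - c\<bar>)"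
  show ?case
  proof (cases "t < x")
    case True
    have "(\<Prod>c\<in>#add_mset x X. t - c) = (t - x) * ((-1)^?s * ?a)" using add by simp
    also have "\<dots> = (-1)^(Suc ?s) * (\<bar>t - x\<bar> * ?a)" using True by (simp add: algebra_simps)
    finally show ?thesis using True by simp
  next
    case False
    have "(\<Prod>c\<in>#add_mset x X. t - c) = (t - x) * ((-1)^?s * ?a)" using add by simp
    also have "\<dots> = (-1)^?s * (\<bar>t - x\<bar> * ?a)" using False by simp
    finally show ?thesis using False by simp
  qed
qed simp

lemma prod_abs_nonneg: "0 \<le> (\<Prod>c\<in>#X. \<bar>(t::real) - c\<bar>)"
  by (induct X) auto

lemma size_filter_split: "size {#x\<in>#X. P x#} + size {#x\<in>#X. \<not> P x#} = size X"
  by (metis multiset_partition size_union)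

lemma nth_image_1: "(\<lambda>i. xs!(i-1)) ` {1..length xs} = set xs"
proof
  show "(\<lambda>i. xs!(i-1)) ` {1..length xs} \<subseteq> set xs" by auto
  show "set xs \<subseteq> (\<lambda>i. xs!(i-1)) ` {1..length xs}"
  proof
    fix x assume "x \<in> set xs"
    then obtain i where i: "i < length xs" "xs!i = x" by (auto simp: in_set_conv_nth)
    hence "Suc i \<in> {1..length xs}" "x = xs!(Suc i - 1)" by auto
    thus "x \<in> (\<lambda>i. xs!(i-1)) ` {1..length xs}" by blast
  qed
qed

lemma inj_nth_1: "distinct xs \<Longrightarrow> inj_on (\<lambda>i. xs!(i-1)) {1..length xs}"
  by (auto simp: inj_on_def nth_eq_iff_index_eq)

lemma shift1_props: "h \<noteq> 0 \<Longrightarrow> shift1 h \<noteq> 0 \<and> degree (shift1 h) = degree h"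
  unfolding shift1_def by (simp add: degree_pcompose pcompose_eq_0_iff)

lemma length_coeff_vec: "h \<noteq> 0 \<Longrightarrow> length (coeff_vec h) = Suc (degree h)"
  unfolding coeff_vec_def by (simp add: length_coeffs_degree)

lemma coeff_vec_nth: "h \<noteq> 0 \<Longrightarrow> i < Suc (degree h) \<Longrightarrow> coeff_vec h ! i = Polynomial.coeff h (degree h - i)"
  unfolding coeff_vec_def
  by (simp add: rev_nth length_coeffs_degree nth_coeffs_coeff)

theorem theorem4p4:
  fixes n :: nat and p q :: "int poly"
  assumes "n \<ge> 2"
    and "seidel_trace n p"
    and "q \<in> J_set n p"
  shows "(\<exists>g :: int poly. rpoly g = rpoly q div gcdp (rpoly p)) \<and>
    (let r = degree (Minp (rpoly p)); F = coeff_vec (shift1 (rpoly q div gcdp (rpoly p))) in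
      1 \<le> r \<and> r \<le> n \<and>
      (\<exists>\<gamma> :: nat \<Rightarrow> real. (\<forall>j\<in>{1..r}. \<gamma> j \<ge> 0) \<and>
         (\<forall>j\<in>{1..r}. length (coeff_vec (shift1 (Minj (rpoly p) j))) = length F) \<and>
         (\<forall>i < length F. F ! i =
            (\<Sum>j = 1..r. \<gamma> j * coeff_vec (shift1 (Minj (rpoly p) j)) ! i))))"
proof -
  define P where "P = rpoly p"
  define Q where "Q = rpoly q"
  have n2: "n \<ge> 2" by fact
  from assms(2) have rrP: "real_rooted P" and dp: "degree p = n" and cp: "Polynomial.coeff p n = 1"
    unfolding seidel_trace_def P_def by auto
  from assms(3) have dq: "degree q = n - 1" and stq: "seidel_trace (n-1) q" and il: "interlaces Q P"
    unfolding J_set_def Q_def P_def by auto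
  from stq have rrQ: "real_rooted Q" and cq: "Polynomial.coeff q (n-1) = 1"
    unfolding seidel_trace_def Q_def by auto
  have lcp: "lead_coeff p = 1" using dp cp by simp
  have lcq: "lead_coeff q = 1" using dq cq by simp
  have dP: "degree P = n" unfolding P_def rpoly_def using dp by (simp add: of_int_hom.degree_map_poly_hom)
  have dQ: "degree Q = n - 1" unfolding Q_def rpoly_def using dq by (simp add: of_int_hom.degree_map_poly_hom)
  have lcP: "lead_coeff P = 1" unfolding P_def rpoly_def using lcp by (simp add: of_int_hom.hom_lead_coeff)
  have lcQ: "lead_coeff Q = 1" unfolding Q_def rpoly_def using lcq by (simp add: of_int_hom.hom_lead_coeff)
  define as where "as = sorted_roots P"
  define bs where "bs = sorted_roots Q"
  define A where "A = mset as"
  define B where "B = mset bs"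
  have PA: "P = LP A" using sorted_roots_LP(1)[OF rrP] lcP unfolding A_def as_def by simp
  have QB: "Q = LP B" using sorted_roots_LP(1)[OF rrQ] lcQ unfolding B_def bs_def by simp
  have ilx: "\<forall>i<n-1. as!i \<le> bs!i \<and> bs!i \<le> as!(Suc i)"
    using il dP unfolding interlaces_def as_def bs_def by auto
  have la: "length as = Suc (n-1)" using sorted_roots_LP(2)[OF rrP] dP n2 unfolding as_def by simp
  have lb: "length bs = n-1" using sorted_roots_LP(2)[OF rrQ] dQ unfolding bs_def by simp
  have szf: "\<And>Pr xs. size (filter_mset Pr (mset xs)) = length (filter Pr xs)"
    by (metis mset_filter size_mset)
  have cle: "size {#x\<in>#B. x \<le> t#} \<le> size {#x\<in>#A. x \<le> t#}"
            "size {#x\<in>#A. x \<le> t#} \<le> Suc (size {#x\<in>#B. x \<le> t#})" for t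
  proof -
    have mono: "\<And>x y. x \<le> y \<Longrightarrow> y \<le> t \<Longrightarrow> x \<le> (t::real)" by auto
    from interlace_count[OF la lb ilx, of "\<lambda>x. x \<le> t", OF mono]
    show "size {#x\<in>#B. x \<le> t#} \<le> size {#x\<in>#A. x \<le> t#}"
            "size {#x\<in>#A. x \<le> t#} \<le> Suc (size {#x\<in>#B. x \<le> t#})"
      unfolding A_def B_def szf by auto
  qed
  have clt: "size {#x\<in>#B. x < t#} \<le> size {#x\<in>#A. x < t#}" for t
  proof -
    have mono: "\<And>x y. x \<le> y \<Longrightarrow> y < t \<Longrightarrow> x < (t::real)" by auto
    from interlace_count[OF la lb ilx, of "\<lambda>x. x < t", OF mono]
    show "size {#x\<in>#B. x < t#} \<le> size {#x\<in>#A. x < t#}"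
      unfolding A_def B_def szf by auto
  qed
  define S where "S = set_mset A"
  define K where "K = mset_set S"
  define G where "G = A - K"
  have finS: "finite S" unfolding S_def by simp
  have szA: "size A = n" using la unfolding A_def using n2 by simp
  have szB: "size B = n - 1" using lb unfolding B_def by simp
  have gP: "gcdp P = LP G" and mP: "Minp P = LP K"
    using gcd_struct[OF rrP PA] szA n2 unfolding gcdp_def Minp_def G_def K_def S_def by auto
  have KA: "K \<subseteq># A" unfolding K_def S_def by (rule mset_set_set_mset_msubset)
  have AKG: "A = K + G" unfolding G_def using KA by simp
  have cK: "count K a = (if a \<in> S then 1 else 0)" for a
    unfolding K_def using finS by (simp add: count_mset_set)
  have GB: "G \<subseteq># B"
  proof (rule mset_subset_eqI)
    fix a
    have cG: "count G a = count A a - count K a" unfolding G_def by simp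
    show "count G a \<le> count B a"
    proof (cases "a \<in> S")
      case False
      hence "count A a = 0" unfolding S_def by (simp add: not_in_iff)
      thus ?thesis using cG by simp
    next
      case True
      have "count A a - 1 \<le> count B a"
        using count_le_lt[of A a] count_le_lt[of B a] cle[of a] clt[of a] by linarith
      thus ?thesis using cG cK True by simp
    qed
  qed
  define R where "R = B - G"
  have BGR: "B = G + R" using GB unfolding R_def by simp
  have Qdec: "Q = gcdp P * LP R" using QB BGR gP by (simp add: LP_add)
  have fR: "Q div gcdp P = LP R" using Qdec gP by simp
  obtain g0 where g0: "gcdp P = rpoly g0" using gcdp_int[OF lcp] unfolding P_def by auto
  have "of_int (lead_coeff g0) = (1::real)"
    using g0 gP unfolding rpoly_def by (metis LP_monic of_int_hom.hom_lead_coeff)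
  hence lcg0: "lead_coeff g0 = 1" by simp
  have "rpoly g0 dvd rpoly q" using Qdec g0 unfolding Q_def by simp
  from monic_int_div[OF lcg0 this] obtain h0 where h0: "rpoly h0 = rpoly q div rpoly g0" by auto
  have conj1: "\<exists>g :: int poly. rpoly g = rpoly q div gcdp (rpoly p)"
    using h0 g0 unfolding P_def by auto
  define r where "r = degree (Minp P)"
  have rS: "r = card S" unfolding r_def mP K_def by simp
  have szK: "size K = r" unfolding rS K_def by simp
  have "size A = size K + size G" using AKG by simp
  hence szG: "size G = n - r" using szA szK by arith
  have "A \<noteq> {#}" using szA n2 by auto
  hence "S \<noteq> {}" unfolding S_def by simp
  hence r1: "1 \<le> r" unfolding rS using finS by (simp add: Suc_leI card_gt_0_iff)
  have rn: "r \<le> n" using size_mset_mono[OF KA] szK szA by simp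
  have "size B = size G + size R" using BGR by simp
  hence szR: "size R = r - 1" using szB szG r1 rn by arith
  have rootsM: "{x. poly (Minp P) x = 0} = S" using finS unfolding mP poly_LP_0 K_def by auto
  define ls where "ls = Min_roots P"
  have ls': "ls = sorted_list_of_set S" unfolding ls_def Min_roots_def rootsM ..
  have lsl: "length ls = r" unfolding ls' rS by simp
  have lsd: "distinct ls" unfolding ls' by simp
  have lss: "set ls = S" unfolding ls' using finS by simp
  define lam where "lam = (\<lambda>i. ls!(i-1))"
  have lamS: "lam ` {1..r} = S" unfolding lam_def using nth_image_1[of ls] lsl lss by simp
  have laminj: "inj_on lam {1..r}" unfolding lam_def using inj_nth_1[OF lsd] lsl by simp
  have MinjEq: "Minj P j = LP (mset_set (S - {lam j}))" if j: "j \<in> {1..r}" for j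
  proof -
    have "Minj P j = (\<Prod>i\<in>{1..r} - {j}. [:-(lam i),1:])"
      unfolding Minj_def lsl[symmetric] ls_def lam_def ..
    also have "\<dots> = (\<Prod>x\<in>lam ` ({1..r}-{j}). [:-x,1:])"
      using prod.reindex[OF inj_on_subset[OF laminj], of "{1..r}-{j}" "\<lambda>x. [:-x,1:]"] by auto
    also have "lam ` ({1..r}-{j}) = S - {lam j}"
      using laminj lamS j by (auto simp: inj_on_image_set_diff)
    also have "(\<Prod>x\<in>S-{lam j}. [:-x,1:]) = LP (mset_set (S - {lam j}))"
      unfolding LP_def by (simp add: prod_unfold_prod_mset)
    finally show ?thesis .
  qed
  have lamin: "lam j \<in> S" if "j \<in> {1..r}" for j using lamS that by auto
  have Mjz: "poly (Minj P j) (lam k) = 0 \<longleftrightarrow> k \<noteq> j" if "j \<in> {1..r}" "k \<in> {1..r}" for j k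
  proof -
    have "poly (Minj P j) (lam k) = 0 \<longleftrightarrow> lam k \<in> S - {lam j}"
      unfolding MinjEq[OF that(1)] poly_LP_0 using finS by simp
    also have "\<dots> \<longleftrightarrow> k \<noteq> j" using lamin[OF that(2)] inj_on_eq_iff[OF laminj that(2) that(1)] by blast
    finally show ?thesis .
  qed
  have dMj: "degree (Minj P j) = r - 1" if "j \<in> {1..r}" for j
    unfolding MinjEq[OF that] using finS lamin[OF that] rS by simp
  have Mj0: "Minj P j \<noteq> 0" if "j \<in> {1..r}" for j
    unfolding MinjEq[OF that] by simp
  define f where "f = LP R"
  have f0: "f \<noteq> 0" unfolding f_def by simp
  have df: "degree f = r - 1" unfolding f_def using szR by simp
  define \<gamma> where "\<gamma> = (\<lambda>j. poly f (lam j) / poly (Minj P j) (lam j))"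
  define H where "H = f - (\<Sum>j=1..r. Polynomial.smult (\<gamma> j) (Minj P j))"
  have "H = 0"
  proof (rule ccontr)
    assume H0: "H \<noteq> 0"
    have dsum: "degree (\<Sum>j=1..r. Polynomial.smult (\<gamma> j) (Minj P j)) \<le> r - 1"
      by (rule degree_sum_le) (auto intro: order.trans[OF degree_smult_le] simp: dMj)
    have dH: "degree H \<le> r - 1" unfolding H_def
      by (rule degree_diff_le) (use df dsum in simp_all)
    have "S \<subseteq> {x. poly H x = 0}"
    proof
      fix x assume "x \<in> S"
      then obtain k where k: "k \<in> {1..r}" "x = lam k" using lamS by auto
      have "(\<Sum>j=1..r. \<gamma> j * poly (Minj P j) (lam k)) = \<gamma> k * poly (Minj P k) (lam k)"
      proof -
        have z: "\<gamma> j * poly (Minj P j) (lam k) = 0" if "j \<in> {1..r} - {k}" for j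
          using Mjz[of j k] that k(1) by auto
        show ?thesis
          by (rule sum.remove[OF _ k(1), THEN trans]) (auto intro!: sum.neutral z)
      qed
      also have "\<dots> = poly f (lam k)" unfolding \<gamma>_def using Mjz[OF k(1) k(1)] by simp
      finally have "poly H (lam k) = 0" unfolding H_def by (simp add: poly_sum)
      thus "x \<in> {x. poly H x = 0}" using k by simp
    qed
    hence "card S \<le> card {x. poly H x = 0}" using poly_roots_finite[OF H0] by (rule card_mono[rotated])
    also have "\<dots> \<le> degree H" by (rule card_poly_roots_bound[OF H0])
    finally show False using dH rS r1 by simp
  qed
  hence fsum: "f = (\<Sum>j=1..r. Polynomial.smult (\<gamma> j) (Minj P j))" unfolding H_def by simp
  have gam: "\<gamma> j \<ge> 0" if j: "j \<in> {1..r}" for j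
  proof -
    define t where "t = lam j"
    have tS: "t \<in> S" unfolding t_def using lamin[OF j] .
    have pM: "poly (Minj P j) t = (-1)^(size {#c\<in>#mset_set (S-{t}). t < c#}) * (\<Prod>c\<in>#mset_set (S - {t}). \<bar>t - c\<bar>)"
      unfolding MinjEq[OF j] poly_LP t_def by (rule prod_sign)
    have pf: "poly f t = (-1)^(size {#c\<in>#R. t < c#}) * (\<Prod>c\<in>#R. \<bar>t - c\<bar>)"
      unfolding f_def poly_LP by (rule prod_sign)
    have Mne: "poly (Minj P j) t \<noteq> 0" unfolding t_def using Mjz[OF j j] by simp
    show ?thesis
    proof (cases "t \<in># R")
      case True
      hence "poly f t = 0" unfolding f_def poly_LP_0 .
      thus ?thesis unfolding \<gamma>_def t_def[symmetric] by simp
    next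
      case False
      define U where "U = (\<lambda>X. size {#c\<in>#X. t < c#})"
      have uK: "U (mset_set (S-{t})) = U K"
      proof -
        have "{x \<in> S - {t}. t < x} = {x \<in> S. t < x}" by auto
        thus ?thesis unfolding U_def K_def using finS by (simp add: filter_mset_mset_set)
      qed
      have uA: "U A = U K + U G" unfolding U_def AKG by simp
      have uB: "U B = U G + U R" unfolding U_def BGR by simp
      have nl: "\<And>X. {#c\<in>#X. \<not> t < c#} = {#c\<in>#X. c \<le> t#}" by (simp add: not_less)
      have sA: "U A + size {#c\<in>#A. c \<le> t#} = n" unfolding U_def using size_filter_split[of "\<lambda>c. t < c" A] szA nl by simp
      have sB: "U B + size {#c\<in>#B. c \<le> t#} = n - 1" unfolding U_def using size_filter_split[of "\<lambda>c. t < c" B] szB nl by simp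
      have "size {#c\<in>#A. c \<le> t#} = Suc (size {#c\<in>#B. c \<le> t#})"
      proof (rule ccontr)
        assume "size {#c\<in>#A. c \<le> t#} \<noteq> Suc (size {#c\<in>#B. c \<le> t#})"
        hence eqle: "size {#c\<in>#A. c \<le> t#} = size {#c\<in>#B. c \<le> t#}" using cle[of t] by linarith
        have "count A t \<le> count B t"
          using count_le_lt[of A t] count_le_lt[of B t] eqle clt[of t] by linarith
        moreover have "count A t = 1 + count G t" using cK[of t] tS unfolding AKG by simp
        moreover have "count B t = count G t + count R t" unfolding BGR by simp
        ultimately have "count R t \<ge> 1" by linarith
        thus False using False by (simp add: not_in_iff)
      qed
      hence "U A = U B" using sA sB n2 by linarith
      hence UR: "U R = U (mset_set (S-{t}))" using uA uB uK by linarith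
      have "poly f t * poly (Minj P j) t = ((-1)^(U R))^2 * ((\<Prod>c\<in>#R. \<bar>t - c\<bar>) * (\<Prod>c\<in>#mset_set (S - {t}). \<bar>t - c\<bar>))"
        unfolding pf pM UR[unfolded U_def] by (simp add: power2_eq_square algebra_simps U_def)
      also have "\<dots> \<ge> 0" by (intro mult_nonneg_nonneg zero_le_power2 prod_abs_nonneg)
      finally have prodnn: "poly f t * poly (Minj P j) t \<ge> 0" .
      have "\<gamma> j = (poly f t * poly (Minj P j) t) / (poly (Minj P j) t)^2"
        unfolding \<gamma>_def t_def[symmetric] using Mne by (simp add: power2_eq_square)
      also have "\<dots> \<ge> 0" using prodnn Mne by simp
      finally show ?thesis .
    qed
  qed
  have Ff: "Q div gcdp P = f" unfolding f_def by (rule fR)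
  define F where "F = coeff_vec (shift1 f)"
  have sf: "shift1 f \<noteq> 0" "degree (shift1 f) = r - 1" using shift1_props[OF f0] df by auto
  have lenF: "length F = r" unfolding F_def using length_coeff_vec[OF sf(1)] sf(2) r1 by simp
  have sM: "shift1 (Minj P j) \<noteq> 0" "degree (shift1 (Minj P j)) = r - 1" if "j \<in> {1..r}" for j
    using shift1_props[OF Mj0[OF that]] dMj[OF that] by auto
  have lenM: "length (coeff_vec (shift1 (Minj P j))) = r" if "j \<in> {1..r}" for j
    using length_coeff_vec[OF sM(1)[OF that]] sM(2)[OF that] r1 by simp
  have shsum: "shift1 f = (\<Sum>j=1..r. Polynomial.smult (\<gamma> j) (shift1 (Minj P j)))"
    unfolding fsum shift1_def by (simp add: pcompose_sum pcompose_smult)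
  have Fi: "F ! i = (\<Sum>j=1..r. \<gamma> j * coeff_vec (shift1 (Minj P j)) ! i)" if i: "i < length F" for i
  proof -
    have ir: "i < Suc (r - 1)" using i lenF r1 by simp
    have "F ! i = Polynomial.coeff (shift1 f) (r - 1 - i)"
      unfolding F_def using coeff_vec_nth[OF sf(1)] sf(2) ir by simp
    also have "\<dots> = (\<Sum>j=1..r. \<gamma> j * Polynomial.coeff (shift1 (Minj P j)) (r - 1 - i))"
      unfolding shsum by (simp add: coeff_sum)
    also have "\<dots> = (\<Sum>j=1..r. \<gamma> j * coeff_vec (shift1 (Minj P j)) ! i)"
    proof (rule sum.cong[OF refl])
      fix j assume j: "j \<in> {1..r}"
      show "\<gamma> j * Polynomial.coeff (shift1 (Minj P j)) (r - 1 - i) = \<gamma> j * coeff_vec (shift1 (Minj P j)) ! i"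
        using coeff_vec_nth[OF sM(1)[OF j]] sM(2)[OF j] ir by simp
    qed
    finally show ?thesis .
  qed
  have conj1': "\<exists>g :: int poly. rpoly g = f" using h0 g0 Ff unfolding Q_def by auto
  show ?thesis
    unfolding Let_def P_def[symmetric] Q_def[symmetric] r_def[symmetric] Ff F_def[symmetric]
    using conj1' r1 rn gam lenM lenF Fi
    by (intro conjI exI[of _ \<gamma>]) auto
qed

end
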